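(* For every $\xi\in(0,1)$ there exists $C(\xi)$ such that if $p\ge C(\log n/n)^{1/2}$, then a.a.s. for every $x\in[1,\xi n/2]$, $G(n,p)$ does not contain a set $W$ of $x$ vertices together with a set $E$ of $x$ pairwise disjoint edges none of which has an endpoint in $W$, such that either the endpoints of each edge in $E$ have at least $\xi np^2$ common neighbours in $W$, or each vertex in $W$ is adjacent to both endpoints of at least $\xi np^2$ edges of $E$.
   Context: $G(n,p)$ is the binomial random graph on $n$ vertices; a.a.s. means with probability tending to $1$ as $n\to\infty$; $\log$ is the natural logarithm. *)

theory Defs
  imports "HOL-Probability.Probability"
begin

text \<open>Vertex set of G(n,p) is {0..<n}; a graph is its set of edges,
  each edge being a 2-element subset of the vertex set.\<close>

definition all_pairs :: "nat \<Rightarrow> nat set set" where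
  "all_pairs n = {e. e \<subseteq> {..<n} \<and> card e = 2}"

definition gnp :: "nat \<Rightarrow> real \<Rightarrow> nat set set pmf" where
  "gnp n p = map_pmf (\<lambda>f. {e \<in> all_pairs n. f e})
                     (Pi_pmf (all_pairs n) False (\<lambda>_. bernoulli_pmf p))"

definition bad_config :: "real \<Rightarrow> nat \<Rightarrow> real \<Rightarrow> nat set set \<Rightarrow> nat \<Rightarrow> bool" where
  "bad_config \<xi> n p G x \<longleftrightarrow>
     (\<exists>W E. W \<subseteq> {..<n} \<and> card W = x \<and> E \<subseteq> G \<and> card E = x \<and>
        (\<forall>e\<in>E. \<forall>f\<in>E. e \<noteq> f \<longrightarrow> e \<inter> f = {}) \<and>
        (\<forall>e\<in>E. e \<inter> W = {}) \<and>
        ((\<forall>e\<in>E. real (card {w\<in>W. \<forall>v\<in>e. {v, w} \<in> G}) \<ge> \<xi> * n * p\<^sup>2) \<or>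
         (\<forall>w\<in>W. real (card {e\<in>E. \<forall>v\<in>e. {v, w} \<in> G}) \<ge> \<xi> * n * p\<^sup>2)))"

end

theory Submission
  imports Defs "HOL-Analysis.Harmonic_Numbers"
begin

lemma finite_all_pairs: "finite (all_pairs n)"
  unfolding all_pairs_def by (rule finite_subset[of _ "Pow {..<n}"]) auto

lemma prob_edges:
  assumes F: "F \<subseteq> all_pairs n" and p: "0 \<le> p" "p \<le> 1"
  shows "measure_pmf.prob (gnp n p) {G. F \<subseteq> G} = p ^ card F"
proof -
  have fin: "finite (all_pairs n)" by (rule finite_all_pairs)
  have pre: "(\<lambda>f. {e \<in> all_pairs n. f e}) -` {G. F \<subseteq> G} =
        Pi (all_pairs n) (\<lambda>e. if e \<in> F then {True} else UNIV)"
    using F by (auto simp: Pi_def split: if_splits)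
  have "measure_pmf.prob (gnp n p) {G. F \<subseteq> G} =
     measure_pmf.prob (Pi_pmf (all_pairs n) False (\<lambda>_. bernoulli_pmf p))
        (Pi (all_pairs n) (\<lambda>e. if e \<in> F then {True} else UNIV))"
    unfolding gnp_def measure_map_pmf pre by simp
  also have "\<dots> = (\<Prod>e\<in>all_pairs n. measure_pmf.prob (bernoulli_pmf p) (if e \<in> F then {True} else UNIV))"
    by (rule measure_Pi_pmf_Pi[OF fin])
  also have "\<dots> = (\<Prod>e\<in>all_pairs n. if e \<in> F then p else 1)"
    by (rule prod.cong) (use p in \<open>auto simp: measure_pmf_single\<close>)
  also have "\<dots> = (\<Prod>e\<in>F. p)"
    using F fin by (subst prod.If_cases) (auto simp: Int_absorb1)
  also have "\<dots> = p ^ card F" by simp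
  finally show ?thesis .
qed

lemma finite_set_gnp: "finite (set_pmf (gnp n p))"
  unfolding gnp_def by (rule finite_subset[of _ "Pow (all_pairs n)"]) (auto intro: finite_all_pairs)

lemma markov_slots:
  fixes I :: "'i set" and F :: "'i \<Rightarrow> nat set set" and t :: real
  assumes fin: "finite I" and Fsub: "\<forall>i\<in>I. F i \<subseteq> all_pairs n"
    and card2: "\<forall>i\<in>I. card (F i) = 2"
    and disj: "\<forall>i\<in>I. \<forall>j\<in>I. i \<noteq> j \<longrightarrow> F i \<inter> F j = {}"
    and p: "0 \<le> p" "p \<le> 1"
  shows "measure_pmf.prob (gnp n p) {G. t \<le> real (card {i\<in>I. F i \<subseteq> G})}
           \<le> (1 + p\<^sup>2) ^ card I / 2 powr t"
proof -
  define M where "M = gnp n p"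
  define A where "A = {G. t \<le> real (card {i\<in>I. F i \<subseteq> G})}"
  define g where "g = (\<lambda>G. (\<Sum>S\<in>Pow I. indicator {G. \<Union>(F ` S) \<subseteq> G} G) / (2 powr t :: real))"
  have int: "integrable M f" for f :: "nat set set \<Rightarrow> real"
    unfolding M_def by (rule integrable_measure_pmf_finite[OF finite_set_gnp])
  have pt: "indicator A G \<le> g G" for G
  proof -
    define K where "K = {i\<in>I. F i \<subseteq> G}"
    have "(\<Sum>S\<in>Pow I. indicator {G. \<Union>(F ` S) \<subseteq> G} G) = (\<Sum>S\<in>Pow I. if S \<in> Pow K then 1 else (0::real))"
      by (rule sum.cong) (auto simp: K_def indicator_def)
    also have "\<dots> = real (card (Pow K))"
    proof -
      have "Pow I \<inter> {x. x \<in> Pow K} = Pow K" by (auto simp: K_def)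
      then show ?thesis using fin by (subst sum.If_cases) auto
    qed
    also have "\<dots> = 2 ^ card K"
      using fin by (simp add: card_Pow K_def)
    finally have s: "(\<Sum>S\<in>Pow I. indicator {G. \<Union>(F ` S) \<subseteq> G} G) = (2::real) ^ card K" .
    show ?thesis
    proof (cases "G \<in> A")
      case True
      then have "t \<le> real (card K)" by (simp add: A_def K_def)
      then have "2 powr t \<le> 2 powr real (card K)" by simp
      also have "\<dots> = 2 ^ card K" by (simp add: powr_realpow)
      finally show ?thesis using True by (simp add: g_def s)
    next
      case False
      then show ?thesis by (simp add: g_def s)
    qed
  qed
  have "measure_pmf.prob M A = integral\<^sup>L M (indicator A)" by simp
  also have "\<dots> \<le> integral\<^sup>L M g"
    by (rule integral_mono[OF int int pt])
  also have "\<dots> = (\<Sum>S\<in>Pow I. integral\<^sup>L M (indicator {G. \<Union>(F ` S) \<subseteq> G})) / 2 powr t"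
    unfolding g_def by (simp add: integral_sum int)
  also have "\<dots> = (\<Sum>S\<in>Pow I. (p\<^sup>2) ^ card S) / 2 powr t"
  proof -
    have "integral\<^sup>L M (indicator {G. \<Union>(F ` S) \<subseteq> G}) = (p\<^sup>2) ^ card S" if S: "S \<in> Pow I" for S
    proof -
      have finS: "finite S" using S fin by (auto intro: finite_subset)
      have "card (\<Union>(F ` S)) = (\<Sum>i\<in>S. card (F i))"
      proof (rule card_UN_disjoint[OF finS])
        show "\<forall>i\<in>S. finite (F i)" using S Fsub by (auto intro: finite_subset[OF _ finite_all_pairs])
        show "\<forall>i\<in>S. \<forall>j\<in>S. i \<noteq> j \<longrightarrow> F i \<inter> F j = {}" using S disj by blast
      qed
      also have "\<dots> = (\<Sum>i\<in>S. 2)" using S card2 by (intro sum.cong) auto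
      also have "\<dots> = 2 * card S" by simp
      finally have c: "card (\<Union>(F ` S)) = 2 * card S" .
      have "integral\<^sup>L M (indicator {G. \<Union>(F ` S) \<subseteq> G}) = measure_pmf.prob M {G. \<Union>(F ` S) \<subseteq> G}" by simp
      also have "\<dots> = p ^ card (\<Union>(F ` S))"
        unfolding M_def by (rule prob_edges) (use S Fsub p in auto)
      also have "\<dots> = (p\<^sup>2) ^ card S" by (simp add: c power_mult)
      finally show ?thesis .
    qed
    then have "(\<Sum>S\<in>Pow I. integral\<^sup>L M (indicator {G. \<Union>(F ` S) \<subseteq> G})) = (\<Sum>S\<in>Pow I. (p\<^sup>2) ^ card S)"
      by (intro sum.cong) auto
    then show ?thesis by simp
  qed
  also have "\<dots> = (1 + p\<^sup>2) ^ card I / 2 powr t"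
  proof -
    have "(\<Prod>i\<in>I. p\<^sup>2 + 1) = (\<Sum>X\<in>Pow I. (\<Prod>i\<in>X. p\<^sup>2) * (\<Prod>i\<in>I-X. 1))"
      by (rule prod_add[OF fin])
    then show ?thesis by (simp add: add.commute)
  qed
  finally show ?thesis unfolding M_def A_def .
qed

definition slotF :: "nat \<times> nat set \<Rightarrow> nat set set" where
  "slotF i = (\<lambda>v. {v, fst i}) ` snd i"

definition cands :: "nat \<Rightarrow> nat \<Rightarrow> (nat set \<times> nat set set) set" where
  "cands n x = {(W, E). W \<subseteq> {..<n} \<and> card W = x \<and> E \<subseteq> all_pairs n \<and> card E = x \<and>
        (\<forall>e\<in>E. \<forall>f\<in>E. e \<noteq> f \<longrightarrow> e \<inter> f = {}) \<and> (\<forall>e\<in>E. e \<inter> W = {})}"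

lemma slots_ok:
  assumes c: "(W, E) \<in> cands n x"
  shows "\<forall>i\<in>W\<times>E. slotF i \<subseteq> all_pairs n"
    and "\<forall>i\<in>W\<times>E. card (slotF i) = 2"
    and "\<forall>i\<in>W\<times>E. \<forall>j\<in>W\<times>E. i \<noteq> j \<longrightarrow> slotF i \<inter> slotF j = {}"
proof -
  have W: "W \<subseteq> {..<n}" and E: "E \<subseteq> all_pairs n"
    and dj: "\<forall>e\<in>E. \<forall>f\<in>E. e \<noteq> f \<longrightarrow> e \<inter> f = {}" and dW: "\<forall>e\<in>E. e \<inter> W = {}"
    using c by (auto simp: cands_def)
  show "\<forall>i\<in>W\<times>E. slotF i \<subseteq> all_pairs n"
  proof
    fix i assume i: "i \<in> W \<times> E"
    then obtain w e where [simp]: "i = (w, e)" and w: "w \<in> W" and e: "e \<in> E" by auto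
    have "e \<subseteq> {..<n}" "card e = 2" using e E by (auto simp: all_pairs_def)
    moreover have "w \<notin> e" using dW e w by auto
    ultimately have "\<forall>v\<in>e. v \<noteq> w \<and> v < n" by auto
    then show "slotF i \<subseteq> all_pairs n"
      unfolding slotF_def all_pairs_def using W w by auto
  qed
  show "\<forall>i\<in>W\<times>E. card (slotF i) = 2"
  proof
    fix i assume i: "i \<in> W \<times> E"
    then obtain w e where [simp]: "i = (w, e)" and w: "w \<in> W" and e: "e \<in> E" by auto
    have "card e = 2" using e E by (auto simp: all_pairs_def)
    then obtain a b where ab: "e = {a, b}" "a \<noteq> b" by (auto simp: card_2_iff)
    moreover have "w \<notin> e" using dW e w by auto
    ultimately have "{a, w} \<noteq> {b, w}" by (auto simp: doubleton_eq_iff)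
    then show "card (slotF i) = 2" using ab by (auto simp: slotF_def)
  qed
  show "\<forall>i\<in>W\<times>E. \<forall>j\<in>W\<times>E. i \<noteq> j \<longrightarrow> slotF i \<inter> slotF j = {}"
  proof (intro ballI impI)
    fix i j assume i: "i \<in> W \<times> E" and j: "j \<in> W \<times> E" and ij: "i \<noteq> j"
    then obtain w e w' e' where [simp]: "i = (w, e)" "j = (w', e')" and w: "w \<in> W" and e: "e \<in> E"
       and w': "w' \<in> W" and e': "e' \<in> E" by auto
    show "slotF i \<inter> slotF j = {}"
    proof (rule ccontr)
      assume "slotF i \<inter> slotF j \<noteq> {}"
      then obtain v v' where v: "v \<in> e" and v': "v' \<in> e'" and eq: "{v, w} = {v', w'}"
        by (auto simp: slotF_def)
      have "v \<notin> W" "v' \<notin> W" using dW v v' e e' by auto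
      then have "v = v'" "w = w'" using eq w w' by (auto simp: doubleton_eq_iff)
      then have "e = e'" using dj v v' e e' by blast
      then show False using ij \<open>w = w'\<close> by simp
    qed
  qed
qed

lemma slot_sub_iff: "slotF (w, e) \<subseteq> G \<longleftrightarrow> (\<forall>v\<in>e. {v, w} \<in> G)"
  by (auto simp: slotF_def)

lemma bad_cand:
  assumes bad: "bad_config \<xi> n p G x" and x: "1 \<le> x" and G: "G \<subseteq> all_pairs n"
  shows "\<exists>c\<in>cands n x. \<xi> * n * p\<^sup>2 * x \<le> real (card {i\<in>fst c \<times> snd c. slotF i \<subseteq> G})"
proof -
  obtain W E where W: "W \<subseteq> {..<n}" "card W = x" and E: "E \<subseteq> G" "card E = x"
    and dj: "\<forall>e\<in>E. \<forall>f\<in>E. e \<noteq> f \<longrightarrow> e \<inter> f = {}" and dW: "\<forall>e\<in>E. e \<inter> W = {}"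
    and cond: "(\<forall>e\<in>E. real (card {w\<in>W. \<forall>v\<in>e. {v, w} \<in> G}) \<ge> \<xi> * n * p\<^sup>2) \<or>
         (\<forall>w\<in>W. real (card {e\<in>E. \<forall>v\<in>e. {v, w} \<in> G}) \<ge> \<xi> * n * p\<^sup>2)"
    using bad unfolding bad_config_def by (elim exE conjE) (rule that, assumption+)
  have c: "(W, E) \<in> cands n x" using W E dj dW G by (auto simp: cands_def)
  have finW: "finite W" using W by (auto intro: finite_subset)
  have finE: "finite E" using E x by (intro card_ge_0_finite) auto
  define T where "T = {i\<in>W \<times> E. slotF i \<subseteq> G}"
  have T1: "T = Sigma W (\<lambda>w. {e\<in>E. \<forall>v\<in>e. {v, w} \<in> G})"
    by (auto simp: T_def slotF_def)
  have T2: "T = prod.swap ` Sigma E (\<lambda>e. {w\<in>W. \<forall>v\<in>e. {v, w} \<in> G})"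
    by (auto simp: T_def slotF_def image_subset_iff intro!: image_eqI)
  have "\<xi> * n * p\<^sup>2 * x \<le> real (card T)"
    using cond
  proof
    assume h: "\<forall>e\<in>E. real (card {w\<in>W. \<forall>v\<in>e. {v, w} \<in> G}) \<ge> \<xi> * n * p\<^sup>2"
    have "card T = (\<Sum>e\<in>E. card {w\<in>W. \<forall>v\<in>e. {v, w} \<in> G})"
      unfolding T2 by (subst card_image) (auto simp: finE finW)
    then have "real (card T) = (\<Sum>e\<in>E. real (card {w\<in>W. \<forall>v\<in>e. {v, w} \<in> G}))" by simp
    also have "\<dots> \<ge> (\<Sum>e\<in>E. \<xi> * n * p\<^sup>2)" by (rule sum_mono) (use h in auto)
    finally show ?thesis using E by (simp add: mult.commute)
  next
    assume h: "\<forall>w\<in>W. real (card {e\<in>E. \<forall>v\<in>e. {v, w} \<in> G}) \<ge> \<xi> * n * p\<^sup>2"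
    have "card T = (\<Sum>w\<in>W. card {e\<in>E. \<forall>v\<in>e. {v, w} \<in> G})"
      unfolding T1 by (subst card_SigmaI) (auto simp: finE finW)
    then have "real (card T) = (\<Sum>w\<in>W. real (card {e\<in>E. \<forall>v\<in>e. {v, w} \<in> G}))" by simp
    also have "\<dots> \<ge> (\<Sum>w\<in>W. \<xi> * n * p\<^sup>2)" by (rule sum_mono) (use h in auto)
    finally show ?thesis using W by (simp add: mult.commute)
  qed
  then show ?thesis by (intro bexI[OF _ c]) (simp add: T_def)
qed

lemma card_all_pairs_le: "card (all_pairs n) \<le> n ^ 2"
proof -
  have "all_pairs n \<subseteq> (\<lambda>(a, b). {a, b}) ` ({..<n} \<times> {..<n})"
  proof
    fix e assume "e \<in> all_pairs n"
    then have "e \<subseteq> {..<n}" "card e = 2" by (auto simp: all_pairs_def)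
    then obtain a b where "e = {a, b}" "a < n" "b < n" by (auto simp: card_2_iff)
    then show "e \<in> (\<lambda>(a, b). {a, b}) ` ({..<n} \<times> {..<n})" by auto
  qed
  then have "card (all_pairs n) \<le> card ((\<lambda>(a, b). {a, b}) ` ({..<n} \<times> {..<n}))"
    by (rule card_mono[rotated]) auto
  also have "\<dots> \<le> card ({..<n} \<times> {..<n})" by (rule card_image_le) auto
  also have "\<dots> = n ^ 2" by (simp add: power2_eq_square)
  finally show ?thesis .
qed

lemma choose_le_pow: "(m choose k) \<le> m ^ k"
  by (cases "k \<le> m") (auto intro: binomial_le_pow simp: binomial_eq_0)

lemma finite_cands: "finite (cands n x)"
  and card_cands: "card (cands n x) \<le> n ^ (3 * x)"
proof -
  define S1 where "S1 = {W. W \<subseteq> {..<n} \<and> card W = x}"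
  define S2 where "S2 = {E. E \<subseteq> all_pairs n \<and> card E = x}"
  have sub: "cands n x \<subseteq> S1 \<times> S2" by (auto simp: cands_def S1_def S2_def)
  have f1: "finite S1" unfolding S1_def by (rule finite_subset[of _ "Pow {..<n}"]) auto
  have f2: "finite S2" unfolding S2_def
    by (rule finite_subset[of _ "Pow (all_pairs n)"]) (auto intro: finite_all_pairs)
  show "finite (cands n x)" using sub f1 f2 by (auto intro: finite_subset)
  have "card (cands n x) \<le> card (S1 \<times> S2)" using sub f1 f2 by (intro card_mono) auto
  also have "\<dots> = (n choose x) * (card (all_pairs n) choose x)"
    unfolding S1_def S2_def card_cartesian_product
    by (subst n_subsets, simp, subst n_subsets, rule finite_all_pairs) simp
  also have "\<dots> \<le> n ^ x * (n ^ 2) ^ x"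
  proof (rule mult_le_mono)
    show "n choose x \<le> n ^ x" by (rule choose_le_pow)
    have "card (all_pairs n) choose x \<le> card (all_pairs n) ^ x" by (rule choose_le_pow)
    also have "\<dots> \<le> (n ^ 2) ^ x" by (rule power_mono[OF card_all_pairs_le]) simp
    finally show "card (all_pairs n) choose x \<le> (n ^ 2) ^ x" .
  qed
  also have "\<dots> = n ^ (3 * x)" by (simp add: power_mult[symmetric] power_add[symmetric])
  finally show "card (cands n x) \<le> n ^ (3 * x)" .
qed

lemma set_gnp_sub: "G \<in> set_pmf (gnp n p) \<Longrightarrow> G \<subseteq> all_pairs n"
  unfolding gnp_def by auto

lemma bad_x_bound:
  assumes p: "0 \<le> p" "p \<le> 1" and x: "1 \<le> x"
  shows "measure_pmf.prob (gnp n p) {G. bad_config \<xi> n p G x}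
          \<le> real n ^ (3 * x) * ((1 + p\<^sup>2) ^ (x * x) / 2 powr (\<xi> * n * p\<^sup>2 * x))"
proof -
  define M where "M = gnp n p"
  define t where "t = \<xi> * n * p\<^sup>2 * x"
  define B where "B = (\<lambda>c. {G. t \<le> real (card {i\<in>fst c \<times> snd c. slotF i \<subseteq> G})})"
  have "{G. bad_config \<xi> n p G x} \<inter> set_pmf M \<subseteq> (\<Union>c\<in>cands n x. B c)"
  proof
    fix G assume "G \<in> {G. bad_config \<xi> n p G x} \<inter> set_pmf M"
    then have "bad_config \<xi> n p G x" "G \<subseteq> all_pairs n" using set_gnp_sub by (auto simp: M_def)
    from bad_cand[OF this(1) x this(2)] show "G \<in> (\<Union>c\<in>cands n x. B c)"
      by (auto simp: B_def t_def)
  qed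
  have "measure_pmf.prob M {G. bad_config \<xi> n p G x}
      = measure_pmf.prob M ({G. bad_config \<xi> n p G x} \<inter> set_pmf M)"
    by (simp add: measure_Int_set_pmf)
  also have "\<dots> \<le> measure_pmf.prob M (\<Union>c\<in>cands n x. B c)"
    by (rule measure_pmf.finite_measure_mono) (fact, simp)
  also have "\<dots> \<le> (\<Sum>c\<in>cands n x. measure_pmf.prob M (B c))"
    by (rule measure_pmf.finite_measure_subadditive_finite) (auto simp: finite_cands)
  also have "\<dots> \<le> real (card (cands n x)) * ((1 + p\<^sup>2) ^ (x * x) / 2 powr t)"
  proof (rule sum_bounded_above)
    fix c assume c: "c \<in> cands n x"
    obtain W E where [simp]: "c = (W, E)" by (cases c)
    have cWE: "(W, E) \<in> cands n x" using c by simp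
    have finW: "finite W" "card W = x" using cWE by (auto simp: cands_def intro: finite_subset)
    have finE: "finite E" "card E = x" using cWE x by (auto simp: cands_def intro: card_ge_0_finite)
    have "measure_pmf.prob M (B c) \<le> (1 + p\<^sup>2) ^ card (W \<times> E) / 2 powr t"
      unfolding M_def B_def fst_conv snd_conv \<open>c = (W, E)\<close>
      by (rule markov_slots[OF _ slots_ok[OF cWE] p]) (simp add: finW finE)
    also have "card (W \<times> E) = x * x" using finW finE by (simp add: card_cartesian_product)
    finally show "measure_pmf.prob M (B c) \<le> (1 + p\<^sup>2) ^ (x * x) / 2 powr t" .
  qed
  also have "\<dots> \<le> real n ^ (3 * x) * ((1 + p\<^sup>2) ^ (x * x) / 2 powr t)"
  proof (rule mult_right_mono)
    show "real (card (cands n x)) \<le> real n ^ (3 * x)"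
      using card_cands[of n x] by (metis of_nat_le_iff of_nat_power)
  qed simp
  finally show ?thesis unfolding M_def t_def .
qed

lemma arith_bound:
  fixes n x :: nat and p \<xi> C :: real
  assumes n: "2 \<le> n" and xi: "0 < \<xi>" and x: "1 \<le> x" and xb: "real x \<le> \<xi> * n / 2"
    and p: "0 \<le> p" and C: "30 \<le> C\<^sup>2 * \<xi>" and np: "C\<^sup>2 * ln n \<le> n * p\<^sup>2"
  shows "real n ^ (3 * x) * ((1 + p\<^sup>2) ^ (x * x) / 2 powr (\<xi> * n * p\<^sup>2 * x)) \<le> 1 / real n ^ 2"
proof -
  define t where "t = \<xi> * n * p\<^sup>2 * x"
  define L where "L = ln (real n)"
  have L0: "0 \<le> L" using n by (simp add: L_def)
  have t0: "0 \<le> t" using xi p by (simp add: t_def)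
  have e1: "(1 + p\<^sup>2) ^ (x * x) \<le> exp (real (x * x) * p\<^sup>2)"
  proof -
    have "(1 + p\<^sup>2) ^ (x * x) \<le> exp (p\<^sup>2) ^ (x * x)"
      by (rule power_mono) (use exp_ge_add_one_self[of "p\<^sup>2"] in auto)
    also have "\<dots> = exp (real (x * x) * p\<^sup>2)" by (rule exp_of_nat_mult[symmetric])
    finally show ?thesis .
  qed
  have e2: "real (x * x) * p\<^sup>2 \<le> t / 2"
  proof -
    have "real x * real x \<le> (\<xi> * n / 2) * real x" by (rule mult_right_mono[OF xb]) simp
    then have "real x * real x * p\<^sup>2 \<le> (\<xi> * n / 2) * real x * p\<^sup>2"
      by (rule mult_right_mono) simp
    then show ?thesis by (simp add: t_def algebra_simps)
  qed
  have e3: "2 powr t = exp (t * ln 2)" by (simp add: powr_def)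
  have ln2: "2/3 \<le> ln (2::real)" by (rule ln2_ge_two_thirds)
  have e4: "t * (2/3) \<le> t * ln 2" by (rule mult_left_mono[OF ln2 t0])
  have e5: "30 * real x * L \<le> t"
  proof -
    have "30 * real x * L \<le> (C\<^sup>2 * \<xi>) * real x * L"
      by (intro mult_right_mono C L0) simp
    also have "\<dots> = \<xi> * real x * (C\<^sup>2 * L)" by simp
    also have "\<dots> \<le> \<xi> * real x * (n * p\<^sup>2)"
      by (rule mult_left_mono) (use np xi in \<open>auto simp: L_def\<close>)
    also have "\<dots> = t" by (simp add: t_def)
    finally show ?thesis .
  qed
  have "(1 + p\<^sup>2) ^ (x * x) / 2 powr t \<le> exp (t / 2) / exp (t * ln 2)"
    unfolding e3 by (rule divide_right_mono) (use e1 e2 in \<open>auto intro: order.trans\<close>)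
  also have "\<dots> = exp (t / 2 - t * ln 2)" by (simp add: exp_diff)
  also have "\<dots> \<le> exp (- (real (5 * x) * L))"
    using e4 e5 by simp
  also have "\<dots> = 1 / real n ^ (5 * x)"
  proof -
    have "exp (real (5 * x) * L) = exp L ^ (5 * x)" by (rule exp_of_nat_mult)
    also have "exp L = real n" using n by (simp add: L_def)
    finally show ?thesis by (simp add: exp_minus field_simps)
  qed
  finally have r: "(1 + p\<^sup>2) ^ (x * x) / 2 powr t \<le> 1 / real n ^ (5 * x)" .
  have "real n ^ (3 * x) * ((1 + p\<^sup>2) ^ (x * x) / 2 powr t) \<le> real n ^ (3 * x) * (1 / real n ^ (5 * x))"
    by (rule mult_left_mono[OF r]) simp
  also have "\<dots> = 1 / real n ^ (2 * x)"
  proof -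
    have "real n ^ (5 * x) = real n ^ (3 * x) * real n ^ (2 * x)" by (simp add: power_add[symmetric])
    then show ?thesis using n by simp
  qed
  also have "\<dots> \<le> 1 / real n ^ 2"
  proof (rule divide_left_mono)
    show "real n ^ 2 \<le> real n ^ (2 * x)" by (rule power_increasing) (use n x in auto)
  qed (use n in auto)
  finally show ?thesis unfolding t_def .
qed

theorem proposition4p3:
  fixes \<xi> :: real
  assumes "0 < \<xi>" and "\<xi> < 1"
  shows "\<exists>C::real. \<forall>p :: nat \<Rightarrow> real.
           (\<forall>n. 0 \<le> p n \<and> p n \<le> 1) \<longrightarrow>
           (\<forall>\<^sub>F n in sequentially. p n \<ge> C * sqrt (ln (real n) / real n)) \<longrightarrow>
           ((\<lambda>n. measure_pmf.prob (gnp n (p n))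
                 {G. \<forall>x::nat. 1 \<le> x \<and> real x \<le> \<xi> * real n / 2 \<longrightarrow>
                        \<not> bad_config \<xi> n (p n) G x}) \<longlonglongrightarrow> 1)"
proof (intro exI allI impI)
  define C where "C = sqrt (30 / \<xi>)"
  have C0: "0 \<le> C" using assms by (simp add: C_def)
  have C2: "C\<^sup>2 = 30 / \<xi>" using assms by (simp add: C_def)
  have CC: "30 \<le> C\<^sup>2 * \<xi>" using assms by (simp add: C2)
  fix p :: "nat \<Rightarrow> real"
  assume p01: "\<forall>n. 0 \<le> p n \<and> p n \<le> 1"
  assume ev: "\<forall>\<^sub>F n in sequentially. p n \<ge> C * sqrt (ln (real n) / real n)"
  define good where "good = (\<lambda>n. {G. \<forall>x::nat. 1 \<le> x \<and> real x \<le> \<xi> * real n / 2 \<longrightarrow>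
                        \<not> bad_config \<xi> n (p n) G x})"
  have low: "1 - 1 / real n \<le> measure_pmf.prob (gnp n (p n)) (good n)"
    if n: "2 \<le> n" and pn: "p n \<ge> C * sqrt (ln (real n) / real n)" for n
  proof -
    define M where "M = gnp n (p n)"
    define X where "X = {x::nat. 1 \<le> x \<and> real x \<le> \<xi> * real n / 2}"
    have XS: "X \<subseteq> {1..n}"
    proof
      fix x assume "x \<in> X"
      then have "1 \<le> x" "real x \<le> \<xi> * real n / 2" by (auto simp: X_def)
      moreover have "\<xi> * real n \<le> 1 * real n" by (rule mult_right_mono) (use assms in auto)
      then have "\<xi> * real n / 2 \<le> real n" by simp
      ultimately show "x \<in> {1..n}" by auto
    qed
    have finX: "finite X" using XS by (rule finite_subset) simp
    have cardX: "card X \<le> n" using card_mono[OF _ XS] by simp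
    have np: "C\<^sup>2 * ln (real n) \<le> real n * (p n)\<^sup>2"
    proof -
      have a0: "0 \<le> C * sqrt (ln (real n) / real n)" using C0 n by simp
      have "(C * sqrt (ln (real n) / real n))\<^sup>2 \<le> (p n)\<^sup>2"
        by (rule power_mono[OF pn a0])
      moreover have "(C * sqrt (ln (real n) / real n))\<^sup>2 = C\<^sup>2 * (ln (real n) / real n)"
        using n by (simp add: power_mult_distrib)
      ultimately have "C\<^sup>2 * ln (real n) / real n \<le> (p n)\<^sup>2" by simp
      then show ?thesis using n by (simp add: field_simps)
    qed
    have compl: "UNIV - good n = (\<Union>x\<in>X. {G. bad_config \<xi> n (p n) G x})"
      by (auto simp: good_def X_def)
    have "measure_pmf.prob M (UNIV - good n) \<le> (\<Sum>x\<in>X. measure_pmf.prob M {G. bad_config \<xi> n (p n) G x})"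
      unfolding compl by (rule measure_pmf.finite_measure_subadditive_finite) (auto simp: finX)
    also have "\<dots> \<le> real (card X) * (1 / real n ^ 2)"
    proof (rule sum_bounded_above)
      fix x assume x: "x \<in> X"
      have "measure_pmf.prob M {G. bad_config \<xi> n (p n) G x}
          \<le> real n ^ (3 * x) * ((1 + (p n)\<^sup>2) ^ (x * x) / 2 powr (\<xi> * n * (p n)\<^sup>2 * x))"
        unfolding M_def by (rule bad_x_bound) (use p01 x in \<open>auto simp: X_def\<close>)
      also have "\<dots> \<le> 1 / real n ^ 2"
        by (rule arith_bound[OF n assms(1) _ _ _ CC np]) (use p01 x in \<open>auto simp: X_def\<close>)
      finally show "measure_pmf.prob M {G. bad_config \<xi> n (p n) G x} \<le> 1 / real n ^ 2" .
    qed
    also have "\<dots> \<le> real n * (1 / real n ^ 2)"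
      by (rule mult_right_mono) (use cardX in auto)
    also have "\<dots> = 1 / real n" using n by (simp add: power2_eq_square)
    finally have b: "measure_pmf.prob M (UNIV - good n) \<le> 1 / real n" .
    have "measure_pmf.prob M (good n) = 1 - measure_pmf.prob M (UNIV - good n)"
      using measure_pmf.prob_compl[of "UNIV - good n" M] by (simp add: Diff_Diff_Int)
    then show ?thesis using b by (simp add: M_def)
  qed
  have ev2: "\<forall>\<^sub>F n in sequentially. 1 - 1 / real n \<le> measure_pmf.prob (gnp n (p n)) (good n)"
    using ev eventually_ge_at_top[of 2] by eventually_elim (rule low)
  have ev3: "\<forall>\<^sub>F n in sequentially. measure_pmf.prob (gnp n (p n)) (good n) \<le> 1"
    by (simp add: measure_pmf.prob_le_1)
  have lim: "(\<lambda>n. 1 - 1 / real n) \<longlonglongrightarrow> (1::real)"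
    using tendsto_diff[OF tendsto_const lim_1_over_n, of 1] by simp
  have "(\<lambda>n. measure_pmf.prob (gnp n (p n)) (good n)) \<longlonglongrightarrow> 1"
    by (rule tendsto_sandwich[OF ev2 ev3 lim tendsto_const])
  then show "(\<lambda>n. measure_pmf.prob (gnp n (p n))
                 {G. \<forall>x::nat. 1 \<le> x \<and> real x \<le> \<xi> * real n / 2 \<longrightarrow>
                        \<not> bad_config \<xi> n (p n) G x}) \<longlonglongrightarrow> 1"
    unfolding good_def .
qed

end
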